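(* Consider the perturbed linear contextual bandit model described in the context. Fix a batch-style algorithm and any batch $B$ in its execution. Assume the batch covariance matrix satisfies $\lambda_{\min}(Z_B)\ge R^2$. Then the batch history $h_B$ can simulate $\mathrm{Rew}(\cdot)$ up to radius $R$.
   Context: Model: $T$ rounds, at most $K$ actions, dimension $d$, latent $\theta\in\mathbb R^d$; contexts $x_{a,t}=\mu_{a,t}+\varepsilon_{a,t}$ with coordinates of $\varepsilon_{a,t}$ i.i.d. $\mathcal N(0,\rho^2)$; the reward of the chosen action is $r_t=\theta^\top x_t+\eta_t$ with $x_t=x_{a_t,t}$ and independent $\eta_t\sim\mathcal N(0,1)$. An algorithm is batch-style if time is divided into batches of $Y$ consecutive rounds and the action in each round depends only on the history up to the previous batch. For a batch $B$: batch history $h_B=((x_t,r_t):t\in B)$, batch context matrix $X_B$ is the $Y\times d$ matrix with rows $x_t$, $t\in B$, and $Z_B=X_B^\top X_B=\sum_{t\in B}x_tx_t^\top$. Parameters: $\hat R=\rho\sqrt{2\log(2TKd\cdot T^2)}$ and $R=1+\hat R\sqrt d$. $\mathrm{Rew}(\cdot)$ is the randomized function that on input $x$ outputs an independent sample from $\mathcal N(\theta^\top x,1)$. Batch history $h_B$ can simulate $\mathrm{Rew}(\cdot)$ up to radius $R>0$ if there exists a function $g$ (of a context vector and a batch history, to $\mathbb R$; not necessarily efficiently computable) such that $g(x,h_B)$ is distributed identically to $\mathrm{Rew}(x)$ conditional on the batch context matrix $X_B$, for all $\theta$ and all $x\in\mathbb R^d$ with $\|x\|_2\le R$. *)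

theory Defs
  imports "HOL-Analysis.Analysis" "HOL-Probability.Probability"
begin

text \<open>Smallest eigenvalue of a real square matrix (used for symmetric matrices,
  whose eigenvalues are all real).\<close>
definition lambda_min :: "real^'d::finite^'d::finite \<Rightarrow> real" where
  "lambda_min A = Min {c. \<exists>v. v \<noteq> 0 \<and> A *v v = c *\<^sub>R v}"

definition R_param :: "nat \<Rightarrow> nat \<Rightarrow> nat \<Rightarrow> real \<Rightarrow> real" where
  "R_param T K d \<rho> =
     1 + \<rho> * sqrt (2 * ln (2 * real T * real K * real d * (real T)^2)) * sqrt (real d)"

definition Rew :: "real^'d \<Rightarrow> real^'d \<Rightarrow> real measure" where
  "Rew \<theta> x = density lborel (normal_density (\<theta> \<bullet> x) 1)"

text \<open>Measurable space of batch histories ((x_t, r_t) : t in B); the batch rounds are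
  indexed by the finite type 'y (so Y = CARD('y)).\<close>
definition hist_space :: "('y::finite \<Rightarrow> (real^'d::finite) \<times> real) measure" where
  "hist_space = Pi\<^sub>M UNIV (\<lambda>_. borel)"

text \<open>Distribution of the batch history h_B conditional on the batch context matrix
  X_B = X (rows X $ t, t in B): the contexts are X and, since in a batch-style algorithm
  the contexts of the batch are determined before any reward of the batch is revealed,
  the rewards are independent, r_t ~ N(theta^T x_t, 1).\<close>
definition batch_hist_dist :: "real^'d \<Rightarrow> real^'d^'y \<Rightarrow> ('y::finite \<Rightarrow> (real^'d::finite) \<times> real) measure" where
  "batch_hist_dist \<theta> X =
     distr (Pi\<^sub>M UNIV (\<lambda>t. density lborel (normal_density (\<theta> \<bullet> (X $ t)) 1)))
           hist_space (\<lambda>r t. (X $ t, r t))"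

text \<open>h_B can simulate Rew up to radius R (conditional on X_B = X): there is a
  (possibly randomized, not necessarily efficient) function g, i.e. a Markov kernel
  from histories to reals for each context x, such that g(x, h_B) has the law of Rew(x)
  for every theta and every x with norm at most R.\<close>
definition can_simulate :: "real^'d^'y \<Rightarrow> real \<Rightarrow> bool" where
  "can_simulate X R \<longleftrightarrow>
     (\<exists>g :: real^'d \<Rightarrow> ('y::finite \<Rightarrow> (real^'d::finite) \<times> real) \<Rightarrow> real measure.
        (\<forall>x. g x \<in> measurable hist_space (prob_algebra borel)) \<and>
        (\<forall>\<theta> x. norm x \<le> R \<longrightarrow> bind (batch_hist_dist \<theta> X) (g x) = Rew \<theta> x))"

end

theory Submission
  imports Defs
begin

lemma t1: fixes A B :: "real^'n" shows "(A + s *\<^sub>R B) \<bullet> (A + s *\<^sub>R B) = (norm A)\<^sup>2 + 2 * s * (B \<bullet> A) + s\<^sup>2 * (norm B)\<^sup>2"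
  unfolding power2_norm_eq_inner by (simp add: inner_add_left inner_add_right inner_commute[of A B] power2_eq_square algebra_simps)
lemma t2: fixes a b s :: real assumes "b \<ge> 0" "s = - a / (b + 1)"
  shows "(b+1)^2 * (2 * s * a + s^2 * b) = -(a^2 * (b+2))"
proof -
  have "b + 1 \<noteq> 0" using assms by simp
  then have sb: "s * (b + 1) = - a" unfolding assms(2) by simp
  have "(b+1)^2 * (2 * s * a + s^2 * b) = 2 * (s * (b+1)) * a * (b+1) + (s * (b+1))^2 * b"
    by (simp add: power2_eq_square algebra_simps)
  also have "\<dots> = -(a^2 * (b+2))" unfolding sb by (simp add: power2_eq_square algebra_simps)
  finally show ?thesis .
qed
lemma t3: fixes a b :: real assumes "b \<ge> 0" "0 \<le> (b+1)^2 * c" "(b+1)^2 * c = -(a^2 * (b+2))"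
  shows "a = 0"
proof -
  have "a^2 * (b+2) \<le> 0" using assms by linarith
  moreover have "b + 2 > 0" using assms by simp
  ultimately have "a^2 \<le> 0" by (simp add: mult_le_0_iff)
  then show ?thesis by simp
qed

lemma quadXX:
  fixes X :: "real^'d^'y"
  shows "u \<bullet> ((transpose X ** X) *v v) = (X *v u) \<bullet> (X *v v)"
proof -
  have "(transpose X ** X) *v v = transpose X *v (X *v v)"
    by (simp add: matrix_vector_mul_assoc)
  also have "\<dots> = (X *v v) v* X" by simp
  finally have "u \<bullet> ((transpose X ** X) *v v) = ((X *v v) v* X) \<bullet> u"
    by (simp add: inner_commute)
  also have "\<dots> = (X *v v) \<bullet> (X *v u)" by (rule dot_lmul_matrix)
  finally show ?thesis by (simp add: inner_commute)
qed

lemma eig_finite: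
  fixes X :: "real^'d^'y"
  defines "Z \<equiv> transpose X ** X"
  shows "finite {c. \<exists>v. v \<noteq> 0 \<and> Z *v v = c *\<^sub>R v}"
proof -
  define E where "E = {c. \<exists>v. v \<noteq> 0 \<and> Z *v v = c *\<^sub>R v}"
  define ev where "ev c = (SOME v. v \<noteq> 0 \<and> Z *v v = c *\<^sub>R v)" for c
  have ev: "ev c \<noteq> 0 \<and> Z *v ev c = c *\<^sub>R ev c" if "c \<in> E" for c
    using that unfolding E_def ev_def by (metis (mono_tags, lifting) mem_Collect_eq someI_ex)
  have orth: "ev c1 \<bullet> ev c2 = 0" if "c1 \<in> E" "c2 \<in> E" "c1 \<noteq> c2" for c1 c2
  proof -
    have "c2 * (ev c1 \<bullet> ev c2) = ev c1 \<bullet> (Z *v ev c2)" using ev[OF that(2)] by simp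
    also have "\<dots> = (X *v ev c1) \<bullet> (X *v ev c2)" unfolding Z_def by (rule quadXX)
    also have "\<dots> = ev c2 \<bullet> (Z *v ev c1)" unfolding Z_def by (simp add: quadXX inner_commute)
    also have "\<dots> = c1 * (ev c1 \<bullet> ev c2)" using ev[OF that(1)] by (simp add: inner_commute)
    finally show ?thesis using that(3) by simp
  qed
  have inj: "inj_on ev E"
  proof (rule inj_onI)
    fix a b assume ab: "a \<in> E" "b \<in> E" "ev a = ev b"
    show "a = b"
    proof (rule ccontr)
      assume "a \<noteq> b"
      then have "ev a \<bullet> ev a = 0" using orth[OF ab(1,2)] ab(3) by simp
      then show False using ev[OF ab(1)] by simp
    qed
  qed
  have "pairwise orthogonal (ev ` E)"
    unfolding pairwise_def orthogonal_def using orth by (metis imageE)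
  moreover have "0 \<notin> ev ` E" using ev by auto
  ultimately have "independent (ev ` E)" by (rule pairwise_orthogonal_independent)
  then have "finite (ev ` E)" by (rule independent_imp_finite)
  then have "finite E" using inj by (rule finite_imageD)
  then show ?thesis unfolding E_def .
qed

lemma rayleigh:
  fixes X :: "real^'d^'y"
  shows "lambda_min (transpose X ** X) * (norm v)\<^sup>2 \<le> (norm (X *v v))\<^sup>2"
proof -
  define Z where "Z = transpose X ** X"
  define E where "E = {c. \<exists>v. v \<noteq> 0 \<and> Z *v v = c *\<^sub>R v}"
  define q where "q v = (norm (X *v v))\<^sup>2" for v :: "real^'d"
  have contq: "continuous_on (sphere 0 1) q"
  proof -
    have "bounded_linear (\<lambda>v::real^'d. X *v v)"
      using matrix_vector_mul_linear linear_conv_bounded_linear by blast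
    then have "continuous_on (sphere 0 1) (\<lambda>v::real^'d. X *v v)"
      by (rule linear_continuous_on)
    then show ?thesis unfolding q_def
      by (intro continuous_on_power continuous_on_norm)
  qed
  have ne: "sphere (0::real^'d) 1 \<noteq> {}"
  proof -
    have "norm (SOME i. i \<in> (Basis::(real^'d) set)) = 1" by (rule norm_Basis[OF SOME_Basis])
    then show ?thesis by (metis empty_iff mem_sphere_0)
  qed
  obtain v0 where v0: "v0 \<in> sphere 0 1" and min: "\<And>y. y \<in> sphere 0 1 \<Longrightarrow> q v0 \<le> q y"
    using continuous_attains_inf[OF compact_sphere ne contq] by blast
  define m where "m = q v0"
  have nv0: "norm v0 = 1" using v0 by simp
  have hom: "m * (norm v)\<^sup>2 \<le> q v" for v
  proof (cases "v = 0")
    case True then show ?thesis by (simp add: q_def)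
  next
    case False
    let ?u = "(1 / norm v) *\<^sub>R v"
    have "?u \<in> sphere 0 1" using False by simp
    then have "m \<le> q ?u" using min m_def by simp
    also have "q ?u = q v / (norm v)\<^sup>2"
      unfolding q_def by (simp add: matrix_vector_mult_scaleR power_divide)
    finally show ?thesis using False by (simp add: field_simps)
  qed
  have key: "u \<bullet> (Z *v v0 - m *\<^sub>R v0) = 0" for u
  proof -
    define a where "a = u \<bullet> (Z *v v0 - m *\<^sub>R v0)"
    define b where "b = q u - m * (norm u)\<^sup>2"
    have b0: "b \<ge> 0" using hom[of u] by (simp add: b_def)
    have expand: "q (v0 + s *\<^sub>R u) - m * (norm (v0 + s *\<^sub>R u))\<^sup>2 = 2 * s * a + s\<^sup>2 * b" for s
    proof -
      have "q (v0 + s *\<^sub>R u) = (X *v v0 + s *\<^sub>R (X *v u)) \<bullet> (X *v v0 + s *\<^sub>R (X *v u))"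
        by (simp add: q_def matrix_vector_right_distrib matrix_vector_mult_scaleR dot_square_norm)
      also have "\<dots> = q v0 + 2 * s * ((X *v u) \<bullet> (X *v v0)) + s\<^sup>2 * q u"
        unfolding q_def by (rule t1)
      finally have 1: "q (v0 + s *\<^sub>R u) = q v0 + 2 * s * ((X *v u) \<bullet> (X *v v0)) + s\<^sup>2 * q u" .
      have 2: "(norm (v0 + s *\<^sub>R u))\<^sup>2 = 1 + 2 * s * (u \<bullet> v0) + s\<^sup>2 * (norm u)\<^sup>2"
        using nv0 t1[of v0 s u] by (simp add: power2_norm_eq_inner)
      have 3: "a = (X *v u) \<bullet> (X *v v0) - m * (u \<bullet> v0)"
        by (simp add: a_def inner_diff_right Z_def quadXX)
      show ?thesis unfolding 1 2 3 b_def m_def by (simp add: algebra_simps)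
    qed
    have nn: "0 \<le> 2 * s * a + s\<^sup>2 * b" for s
      using hom[of "v0 + s *\<^sub>R u"] expand[of s] by simp
    define s where "s = - a / (b + 1)"
    have "0 \<le> (b+1)^2 * (2 * s * a + s^2 * b)" using nn[of s] by simp
    then have "a = 0" using t3[OF b0 _ t2[OF b0 s_def]] by blast
    then show ?thesis unfolding a_def by simp
  qed
  have "Z *v v0 - m *\<^sub>R v0 = 0" using key[of "Z *v v0 - m *\<^sub>R v0"] by simp
  then have "m \<in> E" unfolding E_def using nv0 by (intro CollectI exI[of _ v0]) auto
  moreover have "finite E" unfolding E_def Z_def by (rule eig_finite)
  ultimately have "lambda_min Z \<le> m" unfolding lambda_min_def E_def[symmetric] by simp
  then have "lambda_min Z * (norm v)\<^sup>2 \<le> m * (norm v)\<^sup>2" by (simp add: mult_right_mono)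
  also have "\<dots> \<le> q v" by (rule hom)
  finally show ?thesis unfolding Z_def q_def .
qed

lemma solve_w:
  fixes X :: "real^'d^'y" and R :: real
  assumes lam: "lambda_min (transpose X ** X) \<ge> R\<^sup>2" and R: "R > 0" and x: "norm x \<le> R"
  shows "\<exists>w. transpose X *v w = x \<and> norm w \<le> 1"
proof -
  define Z where "Z = transpose X ** X"
  have low: "R\<^sup>2 * (norm v)\<^sup>2 \<le> (norm (X *v v))\<^sup>2" for v
  proof -
    have "R\<^sup>2 * (norm v)\<^sup>2 \<le> lambda_min Z * (norm v)\<^sup>2"
      using lam unfolding Z_def by (simp add: mult_right_mono)
    also have "\<dots> \<le> (norm (X *v v))\<^sup>2" unfolding Z_def by (rule rayleigh)
    finally show ?thesis .
  qed
  have vZ: "v \<bullet> (Z *v v) = (norm (X *v v))\<^sup>2" for v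
    unfolding Z_def quadXX by (simp add: power2_norm_eq_inner)
  have "inj (\<lambda>v. Z *v v)"
  proof (rule linear_inj_on_iff_eq_0[THEN iffD2, OF matrix_vector_mul_linear, of UNIV, simplified], intro allI impI)
    fix v assume "Z *v v = 0"
    then have "(norm (X *v v))\<^sup>2 = 0" using vZ[of v] by simp
    then have "R\<^sup>2 * (norm v)\<^sup>2 \<le> 0" using low[of v] by simp
    then show "v = 0" using R by (simp add: mult_le_0_iff)
  qed
  then have "surj (\<lambda>v. Z *v v)"
    by (rule linear_injective_imp_surjective[OF matrix_vector_mul_linear]) (rule refl)
  then obtain v where v: "Z *v v = x" by (metis surjE)
  define w where "w = X *v v"
  have "transpose X *v w = x" unfolding w_def using v unfolding Z_def by (simp add: matrix_vector_mul_assoc)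
  moreover have "norm w \<le> 1"
  proof -
    have nw: "(norm w)\<^sup>2 = v \<bullet> x" using vZ[of v] v unfolding w_def by simp
    also have "\<dots> \<le> norm v * norm x" by (rule Cauchy_Schwarz_ineq2[THEN order_trans[OF abs_ge_self]])
    also have "\<dots> \<le> norm v * R" using x by (simp add: mult_left_mono)
    finally have 1: "(norm w)\<^sup>2 \<le> norm v * R" .
    have "R\<^sup>2 * (norm v)\<^sup>2 \<le> (norm w)\<^sup>2" using low[of v] unfolding w_def .
    then have "R\<^sup>2 * (norm v)\<^sup>2 \<le> norm v * R" using 1 by linarith
    then have pp: "(R * norm v) * (R * norm v) \<le> (R * norm v) * 1"
      by (simp add: power2_eq_square algebra_simps)
    have "R * norm v \<le> 1"
    proof (cases "v = 0")
      case False
      then have "R * norm v > 0" using R by simp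
      then show ?thesis using pp mult_le_cancel_left_pos by blast
    qed simp
    then have "(norm w)\<^sup>2 \<le> 1" using 1 by (simp add: mult.commute)
    then show ?thesis by (simp add: power_le_one_iff abs_le_square_iff)
  qed
  ultimately show ?thesis by blast
qed

lemma prob_std: "prob_space std_normal_distribution"
  by (rule prob_space_normal_density) simp

lemma m2: "(\<lambda>x. iexp (t*x)) \<in> borel_measurable borel"
  by (intro borel_measurable_continuous_onI continuous_intros)
lemma m1: "(\<lambda>z. a + b*z) \<in> measurable std_normal_distribution borel"
proof -
  have "(\<lambda>z::real. a + b*z) \<in> borel_measurable borel" by (intro borel_measurable_continuous_onI continuous_intros)
  moreover have "measurable std_normal_distribution borel = measurable borel (borel::real measure)"
    by (rule measurable_cong_sets) (simp_all add: sets_lborel)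
  ultimately show ?thesis by simp
qed

lemma charA: "char (distr std_normal_distribution borel (\<lambda>z. a + b * z)) t
   = iexp (t * a) * complex_of_real (exp (- ((b * t)\<^sup>2) / 2))"
proof -
  have "char (distr std_normal_distribution borel (\<lambda>z. a + b * z)) t
      = (CLINT z|std_normal_distribution. iexp (t * (a + b * z)))"
    unfolding char_def by (rule integral_distr[OF m1 m2])
  also have "\<dots> = (CLINT z|std_normal_distribution. iexp (t * a) * iexp ((b * t) * z))"
  proof (rule Bochner_Integration.integral_cong[OF refl])
    fix z
    have "iexp (t * a) * iexp ((b * t) * z) = exp (\<i> * complex_of_real (t * a) + \<i> * complex_of_real ((b * t) * z))"
      by (simp add: exp_add)
    also have "\<dots> = iexp (t * (a + b * z))"
      by (simp add: algebra_simps)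
    finally show "iexp (t * (a + b * z)) = iexp (t * a) * iexp ((b * t) * z)" by simp
  qed
  also have "\<dots> = iexp (t * a) * char std_normal_distribution (b * t)"
    unfolding char_def by simp
  finally show ?thesis by (simp add: char_std_normal_distribution)
qed

lemma normal_as_distr: "density lborel (normal_density \<mu> 1) = distr std_normal_distribution borel (\<lambda>z. \<mu> + 1 * z)"
proof -
  have d: "distributed std_normal_distribution lborel (\<lambda>x. x) std_normal_density"
    unfolding distributed_def
  proof (intro conjI)
    show "distr std_normal_distribution lborel (\<lambda>x. x) = density lborel (\<lambda>x. ennreal (std_normal_density x))"
      by (rule distr_id2) simp
    show "(\<lambda>x. ennreal (std_normal_density x)) \<in> borel_measurable lborel"
      by simp
    show "(\<lambda>x. x) \<in> measurable std_normal_distribution lborel"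
      by (rule measurable_ident_sets) simp
  qed
  have "distributed std_normal_distribution lborel (\<lambda>x. \<mu> + 1 * x) (normal_density (\<mu> + 1 * 0) (\<bar>1\<bar> * 1))"
    by (rule prob_space.normal_density_affine[OF prob_std d]) auto
  then have "distr std_normal_distribution lborel (\<lambda>x. \<mu> + 1 * x) = density lborel (normal_density \<mu> 1)"
    unfolding distributed_def by simp
  moreover have "distr std_normal_distribution lborel (\<lambda>x. \<mu> + 1 * x) = distr std_normal_distribution borel (\<lambda>x. \<mu> + 1 * x)"
    by (rule distr_cong) auto
  ultimately show ?thesis by simp
qed

lemma charN: "char (density lborel (normal_density \<mu> 1)) t = iexp (t * \<mu>) * complex_of_real (exp (- (t\<^sup>2) / 2))"
proof -
  have "char (density lborel (normal_density \<mu> 1)) t = char (distr std_normal_distribution borel (\<lambda>z. \<mu> + 1 * z)) t"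
    using normal_as_distr[of \<mu>] by (rule arg_cong)
  also have "\<dots> = iexp (t * \<mu>) * complex_of_real (exp (- ((1 * t)\<^sup>2) / 2))" by (rule charA)
  finally show ?thesis by simp
qed

lemma char_bind:
  fixes M :: "'a measure" and K :: "'a \<Rightarrow> real measure"
  assumes M: "prob_space M" and K: "K \<in> M \<rightarrow>\<^sub>M prob_algebra borel"
    and phi: "\<And>\<omega>. \<omega> \<in> space M \<Longrightarrow> char (K \<omega>) t = \<phi> \<omega>"
    and phim: "\<phi> \<in> borel_measurable M"
  shows "char (bind M K) t = integral\<^sup>L M \<phi>"
proof -
  have KS: "K \<in> M \<rightarrow>\<^sub>M subprob_algebra borel" by (rule measurable_prob_algebraD[OF K])
  have ne: "space M \<noteq> {}" using M by (rule prob_space.not_empty)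
  have Kw: "prob_space (K \<omega>) \<and> sets (K \<omega>) = sets borel" if "\<omega> \<in> space M" for \<omega>
    using measurable_space[OF K that] by (simp add: space_prob_algebra)
  have Kr: "real_distribution (K \<omega>)" if "\<omega> \<in> space M" for \<omega>
    using Kw[OF that] by (simp add: real_distribution_def real_distribution_axioms_def)
  have MA: "M \<in> space (prob_algebra M)" using M by (simp add: space_prob_algebra)
  have pb: "prob_space (bind M K)" by (rule prob_space_bind'[OF MA K])
  have sb: "sets (bind M K) = sets borel" by (rule sets_bind'[OF MA K])
  have fm: "finite_measure M" using M by (simp add: prob_space_def)
  have intb: "integrable (bind M K) (\<lambda>x. iexp (t * x))"
  proof (rule finite_measure.integrable_const_bound[where B=1])
    show "finite_measure (bind M K)" using pb by (simp add: prob_space_def)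
    show "AE x in bind M K. norm (iexp (t * x)) \<le> 1" by simp
    show "(\<lambda>x. iexp (t * x)) \<in> borel_measurable (bind M K)"
      unfolding measurable_cong_sets[OF sb refl] by (rule m2)
  qed
  have intphi: "integrable M \<phi>"
  proof (rule finite_measure.integrable_const_bound[OF fm, where B=1])
    show "AE x in M. norm (\<phi> x) \<le> 1"
    proof (rule AE_I2)
      fix x assume x: "x \<in> space M"
      show "norm (\<phi> x) \<le> 1" using real_distribution.cmod_char_le_1[OF Kr[OF x], of t] phi[OF x] by metis
    qed
    show "\<phi> \<in> borel_measurable M" by (rule phim)
  qed
  have cosm: "(\<lambda>x. cos (t * x)) \<in> borel_measurable borel"
    by (intro borel_measurable_continuous_onI continuous_intros)
  have sinm: "(\<lambda>x. sin (t * x)) \<in> borel_measurable borel"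
    by (intro borel_measurable_continuous_onI continuous_intros)
  have re: "Re (char (bind M K) t) = Re (integral\<^sup>L M \<phi>)"
  proof -
    have "Re (char (bind M K) t) = (\<integral>x. Re (iexp (t * x)) \<partial>bind M K)"
      unfolding char_def by (rule integral_Re[OF intb, symmetric])
    also have "\<dots> = (\<integral>x. cos (t * x) \<partial>bind M K)" by (simp add: Re_exp)
    also have "\<dots> = (\<integral>\<omega>. (\<integral>x. cos (t * x) \<partial>K \<omega>) \<partial>M)"
      by (rule integral_bind[OF cosm _ KS fm, where B=1 and B'=1]) (auto intro!: AE_I2 simp: Kw prob_space.emeasure_space_1)
    also have "\<dots> = (\<integral>\<omega>. Re (\<phi> \<omega>) \<partial>M)"
    proof (rule Bochner_Integration.integral_cong[OF refl])
      fix \<omega> assume w: "\<omega> \<in> space M"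
      have "integrable (K \<omega>) (\<lambda>x. iexp (t * x))"
        using prob_space.integrable_iexp[of "K \<omega>" "\<lambda>x. complex_of_real (t * x)"] Kw[OF w]
        by (simp add: measurable_cong_sets[OF _ refl, of "K \<omega>" borel])
      then have "Re (char (K \<omega>) t) = (\<integral>x. Re (iexp (t * x)) \<partial>K \<omega>)"
        unfolding char_def by (rule integral_Re[symmetric])
      then show "(\<integral>x. cos (t * x) \<partial>K \<omega>) = Re (\<phi> \<omega>)" using phi[OF w] by (simp add: Re_exp)
    qed
    also have "\<dots> = Re (integral\<^sup>L M \<phi>)" by (rule integral_Re[OF intphi])
    finally show ?thesis .
  qed
  have im: "Im (char (bind M K) t) = Im (integral\<^sup>L M \<phi>)"
  proof -
    have "Im (char (bind M K) t) = (\<integral>x. Im (iexp (t * x)) \<partial>bind M K)"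
      unfolding char_def by (rule integral_Im[OF intb, symmetric])
    also have "\<dots> = (\<integral>x. sin (t * x) \<partial>bind M K)" by (simp add: Im_exp)
    also have "\<dots> = (\<integral>\<omega>. (\<integral>x. sin (t * x) \<partial>K \<omega>) \<partial>M)"
      by (rule integral_bind[OF sinm _ KS fm, where B=1 and B'=1]) (auto intro!: AE_I2 simp: Kw prob_space.emeasure_space_1)
    also have "\<dots> = (\<integral>\<omega>. Im (\<phi> \<omega>) \<partial>M)"
    proof (rule Bochner_Integration.integral_cong[OF refl])
      fix \<omega> assume w: "\<omega> \<in> space M"
      have "integrable (K \<omega>) (\<lambda>x. iexp (t * x))"
        using prob_space.integrable_iexp[of "K \<omega>" "\<lambda>x. complex_of_real (t * x)"] Kw[OF w]
        by (simp add: measurable_cong_sets[OF _ refl, of "K \<omega>" borel])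
      then have "Im (char (K \<omega>) t) = (\<integral>x. Im (iexp (t * x)) \<partial>K \<omega>)"
        unfolding char_def by (rule integral_Im[symmetric])
      then show "(\<integral>x. sin (t * x) \<partial>K \<omega>) = Im (\<phi> \<omega>)" using phi[OF w] by (simp add: Im_exp)
    qed
    also have "\<dots> = Im (integral\<^sup>L M \<phi>)" by (rule integral_Im[OF intphi])
    finally show ?thesis .
  qed
  show ?thesis using re im by (rule complex_eqI)
qed

lemma sets_P: "sets (Pi\<^sub>M UNIV (\<lambda>s. density lborel (normal_density (\<mu> s) 1))) = sets (Pi\<^sub>M UNIV (\<lambda>_. borel))"
  by (rule sets_PiM_cong) simp_all

lemma mP: fixes w :: "'y::finite \<Rightarrow> real" and c :: complex
  shows "(\<lambda>r. iexp (t * (\<Sum>s\<in>UNIV. w s * r s)) * c) \<in> borel_measurable (Pi\<^sub>M UNIV (\<lambda>s. density lborel (normal_density (\<mu> s) 1)))"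
  unfolding measurable_cong_sets[OF sets_P refl] by measurable

lemma mK: fixes w :: "'y::finite \<Rightarrow> real"
  shows "(\<lambda>(r, z). (\<Sum>s\<in>UNIV. w s * r s) + \<sigma> * z) \<in> (Pi\<^sub>M UNIV (\<lambda>_. borel)) \<Otimes>\<^sub>M borel \<rightarrow>\<^sub>M borel"
  by measurable

lemma S_space: "std_normal_distribution \<in> space (prob_algebra borel)"
  using prob_std by (simp add: space_prob_algebra)

lemma mKP: fixes w :: "'y::finite \<Rightarrow> real"
  shows "(\<lambda>r. distr std_normal_distribution borel (\<lambda>z. (\<Sum>s\<in>UNIV. w s * r s) + \<sigma> * z))
     \<in> Pi\<^sub>M UNIV (\<lambda>s. density lborel (normal_density (\<mu> s) 1)) \<rightarrow>\<^sub>M prob_algebra borel"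
  unfolding measurable_cong_sets[OF sets_P refl]
  by (rule measurable_distr_prob_space2[OF measurable_const[OF S_space]]) (rule mK)

lemma expform: "iexp a * complex_of_real (exp b) = exp (\<i> * complex_of_real a + complex_of_real b)"
  by (simp add: exp_add exp_of_real)

lemma PL:
  fixes \<mu> w :: "'y::finite \<Rightarrow> real" and \<sigma> :: real
  assumes var: "(\<Sum>s\<in>UNIV. (w s)\<^sup>2) + \<sigma>\<^sup>2 = 1"
  shows "bind (Pi\<^sub>M UNIV (\<lambda>s. density lborel (normal_density (\<mu> s) 1)))
           (\<lambda>r. distr std_normal_distribution borel (\<lambda>z. (\<Sum>s\<in>UNIV. w s * r s) + \<sigma> * z))
         = density lborel (normal_density (\<Sum>s\<in>UNIV. w s * \<mu> s) 1)"
proof -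
  define N where "N s = density lborel (normal_density (\<mu> s) 1)" for s
  define P where "P = Pi\<^sub>M UNIV N"
  define K where "K r = distr std_normal_distribution borel (\<lambda>z. (\<Sum>s\<in>UNIV. w s * r s) + \<sigma> * z)" for r :: "'y \<Rightarrow> real"
  have Nprob: "prob_space (N s)" for s unfolding N_def by (rule prob_space_normal_density) simp
  have Pprob: "prob_space P" unfolding P_def by (rule prob_space_PiM) (rule Nprob)
  have Km: "K \<in> P \<rightarrow>\<^sub>M prob_algebra borel" unfolding K_def P_def N_def by (rule mKP)
  have PA: "P \<in> space (prob_algebra P)" using Pprob by (simp add: space_prob_algebra)
  have rd1: "real_distribution (bind P K)"
    using prob_space_bind'[OF PA Km] sets_bind'[OF PA Km]
    by (simp add: real_distribution_def real_distribution_axioms_def)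
  have rd2: "real_distribution (density lborel (normal_density (\<Sum>s\<in>UNIV. w s * \<mu> s) 1))"
    using prob_space_normal_density[of 1] by (simp add: real_distribution_def real_distribution_axioms_def)
  have psf: "product_sigma_finite N"
    unfolding product_sigma_finite_def using Nprob by (simp add: prob_space_imp_sigma_finite)
  have "char (bind P K) t = char (density lborel (normal_density (\<Sum>s\<in>UNIV. w s * \<mu> s) 1)) t" for t
  proof -
    define c where "c = complex_of_real (exp (- ((\<sigma> * t)\<^sup>2) / 2))"
    have "char (bind P K) t = (\<integral>r. iexp (t * (\<Sum>s\<in>UNIV. w s * r s)) * c \<partial>P)"
    proof (rule char_bind[OF Pprob Km])
      fix r assume "r \<in> space P"
      show "char (K r) t = iexp (t * (\<Sum>s\<in>UNIV. w s * r s)) * c"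
        unfolding K_def c_def by (rule charA)
    next
      show "(\<lambda>r. iexp (t * (\<Sum>s\<in>UNIV. w s * r s)) * c) \<in> borel_measurable P"
        unfolding P_def N_def by (rule mP)
    qed
    also have "\<dots> = (\<integral>r. (\<Prod>s\<in>UNIV. iexp ((t * w s) * r s)) \<partial>P) * c"
    proof -
      have "iexp (t * (\<Sum>s\<in>UNIV. w s * r s)) = (\<Prod>s\<in>UNIV. iexp ((t * w s) * r s))" for r
      proof -
        have "\<i> * complex_of_real (t * (\<Sum>s\<in>UNIV. w s * r s)) = (\<Sum>s\<in>UNIV. \<i> * complex_of_real ((t * w s) * r s))"
          by (simp add: sum_distrib_left mult.assoc)
        then show ?thesis by (simp add: exp_sum)
      qed
      then show ?thesis by simp
    qed
    also have "(\<integral>r. (\<Prod>s\<in>UNIV. iexp ((t * w s) * r s)) \<partial>P) = (\<Prod>s\<in>UNIV. char (N s) (t * w s))"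
      unfolding P_def char_def
    proof (rule product_sigma_finite.product_integral_prod[OF psf])
      fix s
      show "integrable (N s) (\<lambda>x. iexp ((t * w s) * x))"
      proof (rule finite_measure.integrable_const_bound[where B=1])
        show "finite_measure (N s)" using Nprob by (simp add: prob_space_def)
        show "AE x in N s. norm (iexp ((t * w s) * x)) \<le> 1" by simp
        show "(\<lambda>x. iexp ((t * w s) * x)) \<in> borel_measurable (N s)"
          unfolding N_def measurable_cong_sets[OF sets_density refl] measurable_lborel2 by (rule m2)
      qed
    qed simp
    also have "\<dots> = (\<Prod>s\<in>UNIV. exp (\<i> * complex_of_real ((t * w s) * \<mu> s) + complex_of_real (- ((t * w s)\<^sup>2) / 2)))"
      unfolding N_def charN expform by (simp add: mult_ac)
    also have "\<dots> = exp (\<Sum>s\<in>UNIV. \<i> * complex_of_real ((t * w s) * \<mu> s) + complex_of_real (- ((t * w s)\<^sup>2) / 2))"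
      by (simp add: exp_sum)
    finally have 1: "char (bind P K) t = exp ((\<Sum>s\<in>UNIV. \<i> * complex_of_real ((t * w s) * \<mu> s) + complex_of_real (- ((t * w s)\<^sup>2) / 2)) + complex_of_real (- ((\<sigma> * t)\<^sup>2) / 2))"
      unfolding c_def exp_add[of _ "complex_of_real (- ((\<sigma> * t)\<^sup>2) / 2)"] exp_of_real .
    have 2: "char (density lborel (normal_density (\<Sum>s\<in>UNIV. w s * \<mu> s) 1)) t
       = exp (\<i> * complex_of_real (t * (\<Sum>s\<in>UNIV. w s * \<mu> s)) + complex_of_real (- (t\<^sup>2) / 2))"
      unfolding charN expform ..
    have e1: "(\<Sum>s\<in>UNIV. \<i> * complex_of_real ((t * w s) * \<mu> s) + complex_of_real (- ((t * w s)\<^sup>2) / 2))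
       = \<i> * complex_of_real (\<Sum>s\<in>UNIV. (t * w s) * \<mu> s) + complex_of_real (\<Sum>s\<in>UNIV. - ((t * w s)\<^sup>2) / 2)"
      unfolding of_real_sum sum_distrib_left sum.distrib by (rule refl)
    have e2: "(\<Sum>s\<in>UNIV. (t * w s) * \<mu> s) = t * (\<Sum>s\<in>UNIV. w s * \<mu> s)"
      by (simp add: sum_distrib_left mult.assoc)
    have e3: "(\<Sum>s\<in>UNIV. - ((t * w s)\<^sup>2) / 2) + (- ((\<sigma> * t)\<^sup>2) / 2) = - (t\<^sup>2) / 2"
    proof -
      have "(\<Sum>s\<in>UNIV. - ((t * w s)\<^sup>2) / 2) = - (t\<^sup>2 / 2) * (\<Sum>s\<in>UNIV. (w s)\<^sup>2)"
        by (simp add: sum_distrib_left power_mult_distrib sum_negf sum_divide_distrib)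
      moreover have "- ((\<sigma> * t)\<^sup>2) / 2 = - (t\<^sup>2 / 2) * \<sigma>\<^sup>2"
        by (simp add: power_mult_distrib)
      ultimately have "(\<Sum>s\<in>UNIV. - ((t * w s)\<^sup>2) / 2) + (- ((\<sigma> * t)\<^sup>2) / 2)
          = - (t\<^sup>2 / 2) * ((\<Sum>s\<in>UNIV. (w s)\<^sup>2) + \<sigma>\<^sup>2)"
        by (simp add: distrib_left)
      then show ?thesis using var by simp
    qed
    have e4: "complex_of_real (\<Sum>s\<in>UNIV. - ((t * w s)\<^sup>2) / 2) + complex_of_real (- ((\<sigma> * t)\<^sup>2) / 2)
        = complex_of_real (- (t\<^sup>2) / 2)"
      unfolding of_real_add[symmetric] e3 ..
    show ?thesis unfolding 1 2 e1 e2 add.assoc e4 ..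
  qed
  then have "char (bind P K) = char (density lborel (normal_density (\<Sum>s\<in>UNIV. w s * \<mu> s) 1))" by (rule ext)
  then have "bind P K = density lborel (normal_density (\<Sum>s\<in>UNIV. w s * \<mu> s) 1)"
    by (rule Levy_uniqueness[OF rd1 rd2])
  then show ?thesis unfolding P_def N_def K_def .
qed

lemma mSnd: "(\<lambda>h::'y::finite \<Rightarrow> (real^'d::finite) \<times> real. snd (h s)) \<in> borel_measurable hist_space"
proof -
  have sm: "snd \<in> borel_measurable (borel :: ((real^'d) \<times> real) measure)"
    by (rule borel_measurable_continuous_onI) (rule continuous_on_snd[OF continuous_on_id])
  have cm: "(\<lambda>h::'y \<Rightarrow> (real^'d) \<times> real. h s) \<in> hist_space \<rightarrow>\<^sub>M borel"
    unfolding hist_space_def by (rule measurable_component_singleton) simp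
  show ?thesis using measurable_compose[OF cm sm] by (simp add: comp_def)
qed

lemma mFh: fixes w :: "real^'y::finite"
  shows "(\<lambda>h::'y \<Rightarrow> (real^'d::finite) \<times> real. (\<Sum>s\<in>UNIV. w $ s * snd (h s))) \<in> borel_measurable hist_space"
  using mSnd[where 'y='y and 'd='d] by measurable

lemma mG: fixes w :: "real^'y::finite"
  shows "(\<lambda>(h::'y \<Rightarrow> (real^'d::finite) \<times> real, z). (\<Sum>s\<in>UNIV. w $ s * snd (h s)) + \<sigma> * z) \<in> hist_space \<Otimes>\<^sub>M borel \<rightarrow>\<^sub>M borel"
  using mFh[where 'y='y and 'd='d and w=w] by measurable

lemma inner_sum: fixes X :: "real^'d::finite^'y::finite"
  shows "\<theta> \<bullet> (transpose X *v w) = (\<Sum>s\<in>UNIV. w $ s * (\<theta> \<bullet> (X $ s)))"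
proof -
  have "\<theta> \<bullet> (transpose X *v w) = (\<Sum>j\<in>UNIV. \<theta> $ j * (\<Sum>s\<in>UNIV. X $ s $ j * w $ s))"
    by (simp add: inner_vec_def transpose_def matrix_vector_mult_def)
  also have "\<dots> = (\<Sum>j\<in>UNIV. \<Sum>s\<in>UNIV. w $ s * (\<theta> $ j * X $ s $ j))"
    by (simp add: sum_distrib_left mult_ac)
  also have "\<dots> = (\<Sum>s\<in>UNIV. \<Sum>j\<in>UNIV. w $ s * (\<theta> $ j * X $ s $ j))"
    by (rule sum.swap)
  also have "\<dots> = (\<Sum>s\<in>UNIV. w $ s * (\<theta> \<bullet> (X $ s)))"
    by (simp add: inner_vec_def sum_distrib_left)
  finally show ?thesis .
qed

lemma norm_sq_sum: fixes w :: "real^'y::finite"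
  shows "(norm w)\<^sup>2 = (\<Sum>s\<in>UNIV. (w $ s)\<^sup>2)"
  unfolding power2_norm_eq_inner inner_vec_def by (simp add: power2_eq_square)

lemma mF: fixes X :: "real^'d::finite^'y::finite"
  shows "(\<lambda>r t. (X $ t, r t)) \<in> Pi\<^sub>M UNIV (\<lambda>s. density lborel (normal_density (\<mu> s) 1)) \<rightarrow>\<^sub>M (hist_space :: ('y \<Rightarrow> (real^'d) \<times> real) measure)"
  unfolding measurable_cong_sets[OF sets_P refl] hist_space_def
proof (rule measurable_PiM_single')
  fix i :: 'y
  have "(\<lambda>r::'y \<Rightarrow> real. (X $ i, r i)) \<in> Pi\<^sub>M UNIV (\<lambda>_. borel) \<rightarrow>\<^sub>M (borel \<Otimes>\<^sub>M borel)"
    by (rule measurable_Pair) (auto intro: measurable_component_singleton)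
  then show "(\<lambda>r::'y \<Rightarrow> real. (X $ i, r i)) \<in> Pi\<^sub>M UNIV (\<lambda>_. borel) \<rightarrow>\<^sub>M borel"
    by (simp add: borel_prod)
qed simp

lemma R_ge1: assumes "T \<ge> 1" "K \<ge> 1" "\<rho> > 0" shows "R_param T K CARD('d::finite) \<rho> \<ge> 1"
proof -
  have n: "(1::nat) \<le> 2 * T * K * CARD('d) * T^2" using assms by (simp add: Suc_le_eq)
  have "(1::real) \<le> real (2 * T * K * CARD('d) * T^2)" using n by linarith
  also have "\<dots> = 2 * real T * real K * real CARD('d) * (real T)^2" by simp
  finally have "0 \<le> ln (2 * real T * real K * real CARD('d) * (real T)^2)" by simp
  then have "0 \<le> \<rho> * sqrt (2 * ln (2 * real T * real K * real CARD('d) * (real T)^2)) * sqrt (real CARD('d))"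
    using assms(3) by simp
  then show ?thesis unfolding R_param_def by simp
qed

theorem lemma4p6:
  fixes T K :: nat and \<rho> :: real and X :: "real^'d^'y"
  assumes "T \<ge> 1" and "K \<ge> 1" and "\<rho> > 0"
    and "lambda_min (transpose X ** X) \<ge> (R_param T K CARD('d) \<rho>)\<^sup>2"
  shows "can_simulate X (R_param T K CARD('d) \<rho>)"
proof -
  define R where "R = R_param T K CARD('d) \<rho>"
  have R1: "R \<ge> 1" unfolding R_def using assms(1-3) by (rule R_ge1)
  have lam: "lambda_min (transpose X ** X) \<ge> R\<^sup>2" using assms(4) unfolding R_def .
  define W where "W x = (SOME w. transpose X *v w = x \<and> norm w \<le> 1)" for x :: "real^'d"
  define sg where "sg x = sqrt (1 - (norm (W x))\<^sup>2)" for x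
  define g where "g x = (\<lambda>h::'y \<Rightarrow> (real^'d) \<times> real. distr std_normal_distribution borel (\<lambda>z. (\<Sum>s\<in>UNIV. W x $ s * snd (h s)) + sg x * z))" for x
  have gm: "g x \<in> hist_space \<rightarrow>\<^sub>M prob_algebra borel" for x
    unfolding g_def by (rule measurable_distr_prob_space2[OF measurable_const[OF S_space]]) (rule mG)
  show ?thesis unfolding can_simulate_def R_def[symmetric]
  proof (intro exI[of _ g] conjI allI impI)
    fix x show "g x \<in> hist_space \<rightarrow>\<^sub>M prob_algebra borel" by (rule gm)
  next
    fix \<theta> x :: "real^'d" assume nx: "norm x \<le> R"
    have ex: "\<exists>w. transpose X *v w = x \<and> norm w \<le> 1"
      using solve_w[OF lam _ nx] R1 by simp
    then have Wx: "transpose X *v W x = x \<and> norm (W x) \<le> 1" unfolding W_def by (rule someI_ex)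
    define P where "P = Pi\<^sub>M UNIV (\<lambda>s. density lborel (normal_density (\<theta> \<bullet> (X $ s)) 1))"
    have Pprob: "prob_space P" unfolding P_def
      by (rule prob_space_PiM) (rule prob_space_normal_density, simp)
    have Pne: "space P \<noteq> {}" using Pprob by (rule prob_space.not_empty)
    have bd: "batch_hist_dist \<theta> X = distr P hist_space (\<lambda>r t. (X $ t, r t))"
      unfolding batch_hist_dist_def P_def ..
    have "bind (batch_hist_dist \<theta> X) (g x) = bind P (\<lambda>r. g x (\<lambda>t. (X $ t, r t)))"
      unfolding bd P_def by (rule bind_distr[OF mF measurable_prob_algebraD[OF gm]]) (use Pne P_def in simp)
    also have "\<dots> = bind P (\<lambda>r. distr std_normal_distribution borel (\<lambda>z. (\<Sum>s\<in>UNIV. W x $ s * r s) + sg x * z))"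
      unfolding g_def by simp
    also have "\<dots> = density lborel (normal_density (\<Sum>s\<in>UNIV. W x $ s * (\<theta> \<bullet> (X $ s))) 1)"
      unfolding P_def
    proof (rule PL)
      have "0 \<le> 1 - (norm (W x))\<^sup>2" using Wx by (simp add: abs_square_le_1)
      then have "(sg x)\<^sup>2 = 1 - (norm (W x))\<^sup>2" unfolding sg_def by simp
      then show "(\<Sum>s\<in>UNIV. (W x $ s)\<^sup>2) + (sg x)\<^sup>2 = 1" unfolding norm_sq_sum by simp
    qed
    also have "\<dots> = Rew \<theta> x"
      unfolding Rew_def inner_sum[symmetric] using Wx by simp
    finally show "bind (batch_hist_dist \<theta> X) (g x) = Rew \<theta> x" .
  qed
qed

end
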